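(* Let $\xi>0$ and $f\in\mathcal{C}(\xi)$, and define $f_\xi(x):=\xi^{-1}f(\sqrt{\xi}x)$ for $x\in\mathbb{R}$. Then $f_\xi\in\mathcal{C}(1)$ and $E(f)=\sqrt{\xi}\,E(f_\xi)$. Consequently $r(\xi)=\sqrt{\xi}\,r(1)$ for all $\xi>0$.
   Context: For $x\in\mathbb{R}$, $\mathbb{P}^{\rm BM}_x$ is the law of a one-dimensional Brownian motion $(B_t)_{t\ge 0}$ started at $x$, and $\tau_y:=\inf\{t\ge0:B_t=y\}$. For $\xi>0$, $\mathcal{C}(\xi)$ is the set of functions $f:\mathbb{R}\to[0,\infty)$ that are non-increasing on $(-\infty,0]$, non-decreasing on $[0,\infty)$, with $\lim_{x\to0}f(x)=0$, $\sup_{\mathbb{R}}f\le\xi$ and $\lim_{x\to\infty}f(x)=\xi$. The energy is $E(f):=-\int_{\mathbb{R}}\log\mathbb{P}^{\rm BM}_x(\tau_y\ge f(y)-f(x)\ \forall y\in\mathbb{R})\,\mathrm{d}x$, and $r(\xi):=\inf\{E(f):f\in\mathcal{C}(\xi)\}$. *)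

theory Defs
  imports "HOL-Probability.Probability"
begin

text \<open>A process B (paths indexed by real time; only times t \<ge> 0 matter) on the
  space M is a one-dimensional Brownian motion started at x.\<close>
definition brownian_motion :: "'a measure \<Rightarrow> ('a \<Rightarrow> real \<Rightarrow> real) \<Rightarrow> real \<Rightarrow> bool" where
  "brownian_motion M B x \<longleftrightarrow>
     prob_space M \<and>
     (\<forall>t. (\<lambda>\<omega>. B \<omega> t) \<in> borel_measurable M) \<and>
     (\<forall>\<omega>\<in>space M. B \<omega> 0 = x \<and> continuous_on {0..} (B \<omega>)) \<and>
     (\<forall>s t. 0 \<le> s \<longrightarrow> s < t \<longrightarrow>
        distributed M lborel (\<lambda>\<omega>. B \<omega> t - B \<omega> s) (normal_density 0 (sqrt (t - s)))) \<and>
     (\<forall>ts. sorted_wrt (<) ts \<longrightarrow> (\<forall>t\<in>set ts. 0 \<le> t) \<longrightarrow>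
        prob_space.indep_vars M (\<lambda>_. borel)
          (\<lambda>i \<omega>. B \<omega> (ts ! Suc i) - B \<omega> (ts ! i)) {i. Suc i < length ts})"

text \<open>Hitting time of level y by the path w: inf {t \<ge> 0. w t = y} (with inf of the empty set = \<infinity>).\<close>
definition hitting_time :: "(real \<Rightarrow> real) \<Rightarrow> real \<Rightarrow> ereal" where
  "hitting_time w y = Inf {ereal t | t. 0 \<le> t \<and> w t = y}"

definition admissible :: "real \<Rightarrow> (real \<Rightarrow> real) set" where
  "admissible \<xi> = {f. (\<forall>x. 0 \<le> f x)
      \<and> (\<forall>a b. a \<le> b \<longrightarrow> b \<le> 0 \<longrightarrow> f b \<le> f a)
      \<and> (\<forall>a b. 0 \<le> a \<longrightarrow> a \<le> b \<longrightarrow> f a \<le> f b)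
      \<and> (f \<longlongrightarrow> 0) (at 0)
      \<and> (\<forall>x. f x \<le> \<xi>)
      \<and> (f \<longlongrightarrow> \<xi>) at_top}"

definition neglog :: "real \<Rightarrow> ennreal" where
  "neglog p = (if p \<le> 0 then \<infinity> else ennreal (- ln p))"

text \<open>Energy E(f), relative to a family of Brownian motions: (M x, B x) is a Brownian motion started at x.\<close>
definition energy :: "(real \<Rightarrow> 'a measure) \<Rightarrow> (real \<Rightarrow> 'a \<Rightarrow> real \<Rightarrow> real) \<Rightarrow> (real \<Rightarrow> real) \<Rightarrow> ennreal" where
  "energy M B f = (\<integral>\<^sup>+ x. neglog (measure (M x)
      {\<omega> \<in> space (M x). \<forall>y. ereal (f y - f x) \<le> hitting_time (B x \<omega>) y}) \<partial>lborel)"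

definition rate :: "(real \<Rightarrow> 'a measure) \<Rightarrow> (real \<Rightarrow> 'a \<Rightarrow> real \<Rightarrow> real) \<Rightarrow> real \<Rightarrow> ennreal" where
  "rate M B \<xi> = (INF f \<in> admissible \<xi>. energy M B f)"

end

theory Submission
  imports Defs
begin


lemma adm_scale:
  assumes f: "f \<in> admissible a" and s: "s > 0" and k: "k > 0"
  shows "(\<lambda>x. f (s * x) * k) \<in> admissible (a * k)"
proof -
  from f have f0: "\<forall>x. 0 \<le> f x" and f1: "\<forall>a b. a \<le> b \<longrightarrow> b \<le> 0 \<longrightarrow> f b \<le> f a"
    and f2: "\<forall>a b. 0 \<le> a \<longrightarrow> a \<le> b \<longrightarrow> f a \<le> f b" and f3: "(f \<longlongrightarrow> 0) (at 0)"
    and f4: "\<forall>x. f x \<le> a" and f5: "(f \<longlongrightarrow> a) at_top"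
    by (auto simp: admissible_def)
  have l1: "filterlim (\<lambda>x. s * x) (at 0) (at 0)"
    using s by (intro filterlim_atI) (auto intro!: tendsto_eq_intros eventually_at_filter[THEN iffD2] 
        simp: eventually_at)
  have l2: "filterlim (\<lambda>x. s * x) at_top at_top"
    using s by (intro filterlim_tendsto_pos_mult_at_top filterlim_ident) auto
  show ?thesis unfolding admissible_def
  proof (intro CollectI conjI allI impI)
    show "0 \<le> f (s * x) * k" for x using f0 k by simp
    show "f (s * y) * k \<le> f (s * x) * k" if "x \<le> y" "y \<le> 0" for x y
      using f1[rule_format, of "s*x" "s*y"] that s k by (simp add: mult_left_mono mult_nonneg_nonpos)
    show "f (s * x) * k \<le> f (s * y) * k" if "0 \<le> x" "x \<le> y" for x y
      using f2[rule_format, of "s*x" "s*y"] that s k by (simp add: mult_left_mono)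
    show "f (s * x) * k \<le> a * k" for x using f4 k by simp
    show "((\<lambda>x. f (s * x) * k) \<longlongrightarrow> 0) (at 0)"
      using tendsto_mult_right[OF filterlim_compose[OF f3 l1], of k] by simp
    show "((\<lambda>x. f (s * x) * k) \<longlongrightarrow> a * k) at_top"
      using tendsto_mult_right[OF filterlim_compose[OF f5 l2], of k] by simp
  qed
qed



lemma nn_integral_scale_le:
  fixes h :: "real \<Rightarrow> ennreal" and c :: real
  assumes c: "c > 0"
  shows "(\<integral>\<^sup>+x. h x \<partial>lborel) \<le> ennreal c * (\<integral>\<^sup>+x. h (c * x) \<partial>lborel)"
  unfolding nn_integral_def[of lborel h]
proof (rule SUP_least, clarsimp)
  fix g assume g: "simple_function lborel g" "g \<le> h"
  have gm: "g \<in> borel_measurable borel"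
    using borel_measurable_simple_function[OF g(1)] by simp
  have "integral\<^sup>S lborel g = (\<integral>\<^sup>+x. g x \<partial>lborel)"
    using nn_integral_eq_simple_integral[OF g(1)] by simp
  also have "\<dots> = ennreal \<bar>c\<bar> * (\<integral>\<^sup>+x. g (0 + c * x) \<partial>lborel)"
    using nn_integral_real_affine[OF gm, of c 0] c by simp
  also have "\<dots> \<le> ennreal c * (\<integral>\<^sup>+x. h (c * x) \<partial>lborel)"
    using c g(2) by (auto intro!: mult_left_mono nn_integral_mono simp: le_fun_def)
  finally show "integral\<^sup>S lborel g \<le> ennreal c * (\<integral>\<^sup>+x. h (c * x) \<partial>lborel)" .
qed

lemma nn_integral_scale_any:
  fixes h :: "real \<Rightarrow> ennreal" and c :: real
  assumes c: "c > 0"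
  shows "(\<integral>\<^sup>+x. h x \<partial>lborel) = ennreal c * (\<integral>\<^sup>+x. h (c * x) \<partial>lborel)"
proof (rule antisym)
  show "(\<integral>\<^sup>+x. h x \<partial>lborel) \<le> ennreal c * (\<integral>\<^sup>+x. h (c * x) \<partial>lborel)"
    by (rule nn_integral_scale_le[OF c])
  have "(\<integral>\<^sup>+x. h (c * x) \<partial>lborel) \<le> ennreal (1/c) * (\<integral>\<^sup>+x. h (c * ((1/c) * x)) \<partial>lborel)"
    using nn_integral_scale_le[of "1/c" "\<lambda>x. h (c * x)"] c by simp
  also have "\<dots> = ennreal (1/c) * (\<integral>\<^sup>+x. h x \<partial>lborel)" using c by simp
  finally have "ennreal c * (\<integral>\<^sup>+x. h (c * x) \<partial>lborel) \<le> ennreal c * (ennreal (1/c) * (\<integral>\<^sup>+x. h x \<partial>lborel))"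
    by (rule mult_left_mono) simp
  also have "\<dots> = (\<integral>\<^sup>+x. h x \<partial>lborel)"
    using c by (simp add: mult.assoc[symmetric] ennreal_mult[symmetric])
  finally show "ennreal c * (\<integral>\<^sup>+x. h (c * x) \<partial>lborel) \<le> (\<integral>\<^sup>+x. h x \<partial>lborel)" .
qed



definition Qp :: "real set" where "Qp = {q. q \<in> \<rat> \<and> 0 \<le> q}"

lemma countable_Qp: "countable Qp"
  unfolding Qp_def using countable_rat by (rule countable_subset[rotated]) auto

lemma sup_rat:
  fixes w :: "real \<Rightarrow> real"
  assumes w: "continuous_on {0..q} w" and q: "q \<in> Qp"
  shows "\<exists>t0\<in>{0..q}. (SUP s\<in>Qp\<inter>{..q}. ereal (w s)) = ereal (w t0) \<and> (\<forall>t\<in>{0..q}. w t \<le> w t0)"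
proof -
  have q0: "0 \<le> q" "q \<in> \<rat>" using q by (auto simp: Qp_def)
  obtain t0 where t0: "t0 \<in> {0..q}" "\<forall>t\<in>{0..q}. w t \<le> w t0"
    using continuous_attains_sup[OF compact_Icc _ w] q0 by auto
  have "(SUP s\<in>Qp\<inter>{..q}. ereal (w s)) = ereal (w t0)"
  proof (rule antisym)
    show "(SUP s\<in>Qp\<inter>{..q}. ereal (w s)) \<le> ereal (w t0)"
      using t0 by (auto intro!: SUP_least simp: Qp_def)
    show "ereal (w t0) \<le> (SUP s\<in>Qp\<inter>{..q}. ereal (w s))"
    proof (rule ereal_le_epsilon2)
      fix e :: real assume e: "0 < e"
      have "continuous (at t0 within {0..q}) w"
        using w t0(1) continuous_on_eq_continuous_within by blast
      then obtain d where d: "d > 0" "\<forall>s\<in>{0..q}. dist s t0 < d \<longrightarrow> dist (w s) (w t0) < e"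
        using e unfolding continuous_within_eps_delta by blast
      obtain s where s: "s \<in> Qp \<inter> {..q}" "dist s t0 < d"
      proof (cases "t0 = q")
        case True then show ?thesis using that[of q] q d by auto
      next
        case False
        then have "t0 < min q (t0 + d)" using t0 d by auto
        then obtain r where "r \<in> \<rat>" "t0 < r" "r < min q (t0 + d)"
          using Rats_dense_in_real by blast
        then show ?thesis using that[of r] t0 by (auto simp: Qp_def dist_real_def)
      qed
      have "w t0 < w s + e" using d(2) s by (auto simp: Qp_def dist_real_def)
      then have "ereal (w t0) \<le> ereal (w s) + ereal e" by simp
      also have "ereal (w s) \<le> (SUP s\<in>Qp\<inter>{..q}. ereal (w s))"
        using s(1) by (rule SUP_upper)
      finally show "ereal (w t0) \<le> (SUP s\<in>Qp\<inter>{..q}. ereal (w s)) + ereal e"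
        by (simp add: add_right_mono)
    qed
  qed
  then show ?thesis using t0 by blast
qed

lemma inf_rat:
  fixes w :: "real \<Rightarrow> real"
  assumes w: "continuous_on {0..q} w" and q: "q \<in> Qp"
  shows "\<exists>t0\<in>{0..q}. (INF s\<in>Qp\<inter>{..q}. ereal (w s)) = ereal (w t0) \<and> (\<forall>t\<in>{0..q}. w t0 \<le> w t)"
proof -
  have w': "continuous_on {0..q} (\<lambda>t. - w t)" using w by (intro continuous_intros)
  obtain t0 where t0: "t0 \<in> {0..q}" "(SUP s\<in>Qp\<inter>{..q}. ereal (- w s)) = ereal (- w t0)"
    "\<forall>t\<in>{0..q}. - w t \<le> - w t0"
    using sup_rat[OF w' q] by blast
  have "(INF s\<in>Qp\<inter>{..q}. ereal (w s)) = (INF s\<in>Qp\<inter>{..q}. - ereal (- w s))" by simp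
  also have "\<dots> = - (SUP s\<in>Qp\<inter>{..q}. ereal (- w s))" by (rule ereal_INF_uminus_eq)
  also have "\<dots> = ereal (w t0)" using t0(2) by simp
  finally show ?thesis using t0 by force
qed



definition Rset :: "(real \<Rightarrow> real) \<Rightarrow> real \<Rightarrow> real \<Rightarrow> ereal \<Rightarrow> bool" where
  "Rset g c q e = (\<exists>y. e = ereal y \<and> 0 \<le> y \<and> c + q < g y)"
definition Lset :: "(real \<Rightarrow> real) \<Rightarrow> real \<Rightarrow> real \<Rightarrow> ereal \<Rightarrow> bool" where
  "Lset g c q e = (\<exists>y. e = ereal y \<and> y \<le> 0 \<and> c + q < g y)"
definition goodpath :: "(real \<Rightarrow> real) \<Rightarrow> real \<Rightarrow> (real \<Rightarrow> real) \<Rightarrow> bool" where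
  "goodpath g c z = (\<forall>q\<in>Qp. \<not> Rset g c q (SUP s\<in>Qp\<inter>{..q}. ereal (z s))
       \<and> \<not> Lset g c q (INF s\<in>Qp\<inter>{..q}. ereal (z s)))"

lemma path_char:
  fixes w g :: "real \<Rightarrow> real"
  assumes w: "continuous_on {0..} w"
    and g1: "\<forall>a b. a \<le> b \<longrightarrow> b \<le> 0 \<longrightarrow> g b \<le> g a"
    and g2: "\<forall>a b. 0 \<le> a \<longrightarrow> a \<le> b \<longrightarrow> g a \<le> g b"
  shows "(\<forall>t\<ge>0. g (w t) \<le> c + t) \<longleftrightarrow> goodpath g c w"
proof
  assume H: "\<forall>t\<ge>0. g (w t) \<le> c + t"
  show "goodpath g c w" unfolding goodpath_def
  proof (intro ballI conjI notI)
    fix q assume q: "q \<in> Qp"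
    have wq: "continuous_on {0..q} w" using w by (rule continuous_on_subset) auto
    {
      assume "Rset g c q (SUP s\<in>Qp\<inter>{..q}. ereal (w s))"
      then obtain y where y: "(SUP s\<in>Qp\<inter>{..q}. ereal (w s)) = ereal y" "c + q < g y"
        by (auto simp: Rset_def)
      obtain t0 where t0: "t0 \<in> {0..q}" "(SUP s\<in>Qp\<inter>{..q}. ereal (w s)) = ereal (w t0)"
        using sup_rat[OF wq q] by blast
      have "g (w t0) \<le> c + t0" using H t0(1) by auto
      then show False using y t0 by auto
    }
    {
      assume "Lset g c q (INF s\<in>Qp\<inter>{..q}. ereal (w s))"
      then obtain y where y: "(INF s\<in>Qp\<inter>{..q}. ereal (w s)) = ereal y" "c + q < g y"
        by (auto simp: Lset_def)
      obtain t0 where t0: "t0 \<in> {0..q}" "(INF s\<in>Qp\<inter>{..q}. ereal (w s)) = ereal (w t0)"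
        using inf_rat[OF wq q] by blast
      have "g (w t0) \<le> c + t0" using H t0(1) by auto
      then show False using y t0 by auto
    }
  qed
next
  assume G: "goodpath g c w"
  show "\<forall>t\<ge>0. g (w t) \<le> c + t"
  proof (rule ccontr)
    assume "\<not> (\<forall>t\<ge>0. g (w t) \<le> c + t)"
    then obtain t where t: "t \<ge> 0" "c + t < g (w t)" by auto
    then obtain q where q: "q \<in> \<rat>" "t < q" "q < g (w t) - c"
      using Rats_dense_in_real[of t "g (w t) - c"] by auto
    have qQ: "q \<in> Qp" using q t by (auto simp: Qp_def)
    have wq: "continuous_on {0..q} w" using w by (rule continuous_on_subset) auto
    show False
    proof (cases "0 \<le> w t")
      case True
      obtain t0 where t0: "t0 \<in> {0..q}" "(SUP s\<in>Qp\<inter>{..q}. ereal (w s)) = ereal (w t0)"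
        "\<forall>s\<in>{0..q}. w s \<le> w t0"
        using sup_rat[OF wq qQ] by blast
      have "w t \<le> w t0" using t0(3) t q by auto
      then have "g (w t) \<le> g (w t0)" using g2 True by auto
      then have "Rset g c q (SUP s\<in>Qp\<inter>{..q}. ereal (w s))"
        unfolding Rset_def using t0 True \<open>w t \<le> w t0\<close> q by (intro exI[of _ "w t0"]) auto
      then show False using G qQ by (auto simp: goodpath_def)
    next
      case False
      obtain t0 where t0: "t0 \<in> {0..q}" "(INF s\<in>Qp\<inter>{..q}. ereal (w s)) = ereal (w t0)"
        "\<forall>s\<in>{0..q}. w t0 \<le> w s"
        using inf_rat[OF wq qQ] by blast
      have "w t0 \<le> w t" using t0(3) t q by auto
      then have "g (w t) \<le> g (w t0)" using g1 False by auto
      then have "Lset g c q (INF s\<in>Qp\<inter>{..q}. ereal (w s))"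
        unfolding Lset_def using t0 False \<open>w t0 \<le> w t\<close> q by (intro exI[of _ "w t0"]) auto
      then show False using G qQ by (auto simp: goodpath_def)
    qed
  qed
qed



lemma upclosed_borel:
  fixes U :: "real set"
  assumes "\<And>y y'. y \<in> U \<Longrightarrow> y \<le> y' \<Longrightarrow> y' \<in> U"
  shows "U \<in> sets borel"
proof -
  have "mono (indicator U :: real \<Rightarrow> real)"
    using assms by (auto simp: mono_def indicator_def)
  then have "(indicator U :: real \<Rightarrow> real) \<in> borel_measurable borel"
    by (rule borel_measurable_mono)
  then show ?thesis using borel_measurable_indicator_iff[of U borel, where 'x=real] by simp
qed

lemma downclosed_borel:
  fixes U :: "real set"
  assumes "\<And>y y'. y \<in> U \<Longrightarrow> y' \<le> y \<Longrightarrow> y' \<in> U"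
  shows "U \<in> sets borel"
proof -
  have "mono (\<lambda>y. - indicator U y :: real)"
    using assms by (auto simp: mono_def indicator_def)
  then have "(\<lambda>y. - indicator U y :: real) \<in> borel_measurable borel"
    by (rule borel_measurable_mono)
  then have "(\<lambda>y. - (- indicator U y) :: real) \<in> borel_measurable borel"
    by (rule borel_measurable_uminus)
  then have "(indicator U :: real \<Rightarrow> real) \<in> borel_measurable borel" by simp
  then show ?thesis using borel_measurable_indicator_iff[of U borel, where 'x=real] by simp
qed

lemma ereal_pred_meas:
  assumes U: "U \<in> sets borel"
  shows "{e::ereal. \<exists>y. e = ereal y \<and> y \<in> U} \<in> sets borel"
proof -
  have eq: "{e::ereal. \<exists>y. e = ereal y \<and> y \<in> U} = {e. e \<noteq> \<infinity> \<and> e \<noteq> -\<infinity> \<and> real_of_ereal e \<in> U}"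
    by (rule set_eqI, case_tac x) auto
  have "{e::ereal. e \<noteq> \<infinity> \<and> e \<noteq> -\<infinity> \<and> real_of_ereal e \<in> U} \<in> sets borel"
    using U by measurable
  then show ?thesis using eq by simp
qed

lemma goodpath_meas:
  assumes g1: "\<forall>a b. a \<le> b \<longrightarrow> b \<le> 0 \<longrightarrow> g b \<le> g a"
    and g2: "\<forall>a b. 0 \<le> a \<longrightarrow> a \<le> b \<longrightarrow> g a \<le> g b"
  shows "{z \<in> space (PiM Qp (\<lambda>_. borel)). goodpath g c z} \<in> sets (PiM Qp (\<lambda>_. borel))"
proof -
  let ?P = "PiM Qp (\<lambda>_. borel :: real measure)"
  have R: "{e. Rset g c q e} \<in> sets borel" for q
  proof -
    have "{y. 0 \<le> y \<and> c + q < g y} \<in> sets borel"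
      by (rule upclosed_borel) (use g2 in force)
    from ereal_pred_meas[OF this] show ?thesis by (simp add: Rset_def)
  qed
  have L: "{e. Lset g c q e} \<in> sets borel" for q
  proof -
    have "{y. y \<le> 0 \<and> c + q < g y} \<in> sets borel"
      by (rule downclosed_borel) (use g1 in force)
    from ereal_pred_meas[OF this] show ?thesis by (simp add: Lset_def)
  qed
  have cnt: "countable (Qp \<inter> {..q})" for q using countable_Qp by auto
  have S: "(\<lambda>z. SUP s\<in>Qp\<inter>{..q}. ereal (z s)) \<in> borel_measurable ?P" for q
    by (rule borel_measurable_SUP[OF cnt]) (auto intro!: measurable_compose[OF measurable_component_singleton] borel_measurable_ereal)
  have I: "(\<lambda>z. INF s\<in>Qp\<inter>{..q}. ereal (z s)) \<in> borel_measurable ?P" for q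
    by (rule borel_measurable_INF[OF cnt]) (auto intro!: measurable_compose[OF measurable_component_singleton] borel_measurable_ereal)
  have SR: "{z \<in> space ?P. Rset g c q (SUP s\<in>Qp\<inter>{..q}. ereal (z s))} \<in> sets ?P" for q
    using measurable_sets[OF S R] by (simp add: vimage_def Int_def conj_commute)
  have IL: "{z \<in> space ?P. Lset g c q (INF s\<in>Qp\<inter>{..q}. ereal (z s))} \<in> sets ?P" for q
    using measurable_sets[OF I L] by (simp add: vimage_def Int_def conj_commute)
  have "{z \<in> space ?P. goodpath g c z} = 
     (\<Inter>q\<in>Qp. space ?P - ({z \<in> space ?P. Rset g c q (SUP s\<in>Qp\<inter>{..q}. ereal (z s))}
        \<union> {z \<in> space ?P. Lset g c q (INF s\<in>Qp\<inter>{..q}. ereal (z s))})) \<inter> space ?P"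
    by (auto simp: goodpath_def)
  also have "\<dots> \<in> sets ?P"
  proof -
    have "0 \<in> Qp" by (simp add: Qp_def)
    then show ?thesis using SR IL countable_Qp by (intro sets.Int sets.countable_INT' sets.top) auto
  qed
  finally show ?thesis .
qed



definition tsl :: "real set \<Rightarrow> real list" where
  "tsl J = 0 # sorted_list_of_set (insert 1 (J - {0}))"
definition Ix :: "real set \<Rightarrow> nat set" where
  "Ix J = {i. Suc i < length (tsl J)}"
definition Sset :: "real \<Rightarrow> real set \<Rightarrow> (real \<Rightarrow> real set) \<Rightarrow> (nat \<Rightarrow> real) set" where
  "Sset x J A = {d \<in> space (PiM (Ix J) (\<lambda>_. borel)). \<forall>j\<in>J. \<forall>k\<in>{..<length (tsl J)}.
      tsl J ! k = j \<longrightarrow> x + (\<Sum>i<k. d i) \<in> A j}"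
definition fddm :: "real set \<Rightarrow> (nat \<Rightarrow> real) measure" where
  "fddm J = PiM (Ix J) (\<lambda>i. density lborel (\<lambda>y. ennreal (normal_density 0 (sqrt (tsl J ! Suc i - tsl J ! i)) y)))"

lemma tsl_props:
  assumes J: "finite J" "J \<subseteq> {0..}"
  shows "sorted_wrt (<) (tsl J)" "\<forall>t\<in>set (tsl J). 0 \<le> t" "J \<subseteq> set (tsl J)"
    "tsl J ! 0 = 0" "0 \<in> Ix J"
proof -
  let ?S = "insert 1 (J - {0})"
  have fin: "finite ?S" using J by auto
  have s: "set (sorted_list_of_set ?S) = ?S" using fin by (rule set_sorted_list_of_set)
  have pos: "\<forall>y\<in>?S. 0 < y" using J by force
  show "sorted_wrt (<) (tsl J)"
    unfolding tsl_def using pos s strict_sorted_list_of_set[of ?S] by simp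
  show "\<forall>t\<in>set (tsl J). 0 \<le> t" unfolding tsl_def using pos s J by auto
  show "J \<subseteq> set (tsl J)" unfolding tsl_def using s by auto
  show "tsl J ! 0 = 0" by (simp add: tsl_def)
  have "sorted_list_of_set ?S \<noteq> []" using fin by simp
  then show "0 \<in> Ix J" by (simp add: Ix_def tsl_def length_greater_0_conv[symmetric] del: length_greater_0_conv length_sorted_list_of_set)
qed

lemma Sset_meas:
  assumes A: "\<And>j. j \<in> J \<Longrightarrow> A j \<in> sets borel" and J: "finite J"
  shows "Sset x J A \<in> sets (PiM (Ix J) (\<lambda>_. borel))"
proof -
  let ?P = "PiM (Ix J) (\<lambda>_. borel :: real measure)"
  have sm: "(\<lambda>d. x + (\<Sum>i<k. d i)) \<in> borel_measurable ?P" if "k < length (tsl J)" for k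
    using that by (auto intro!: borel_measurable_add borel_measurable_sum measurable_component_singleton simp: Ix_def)
  show ?thesis unfolding Sset_def
  proof (intro sets.sets_Collect_finite_All J finite_lessThan sets.sets_Collect_imp sets.sets_Collect_const)
    fix j k assume jk: "j \<in> J" "k \<in> {..<length (tsl J)}"
    have "(\<lambda>d. x + (\<Sum>i<k. d i)) -` A j \<inter> space ?P \<in> sets ?P"
      using measurable_sets[OF sm A] jk by auto
    moreover have "(\<lambda>d. x + (\<Sum>i<k. d i)) -` A j \<inter> space ?P = {d \<in> space ?P. x + (\<Sum>i<k. d i) \<in> A j}"
      by auto
    ultimately show "{d \<in> space ?P. x + (\<Sum>i<k. d i) \<in> A j} \<in> sets ?P" by simp
  qed
qed



lemma fdd:
  assumes BM: "brownian_motion M B x" and J: "finite J" "J \<subseteq> {0..}"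
    and A: "\<And>j. j \<in> J \<Longrightarrow> A j \<in> sets borel"
  shows "emeasure M {\<omega>\<in>space M. \<forall>j\<in>J. B \<omega> j \<in> A j} = emeasure (fddm J) (Sset x J A)"
proof -
  have ps: "prob_space M" and meas: "\<And>t. (\<lambda>\<omega>. B \<omega> t) \<in> borel_measurable M"
    and start: "\<And>\<omega>. \<omega> \<in> space M \<Longrightarrow> B \<omega> 0 = x"
    and dist: "\<And>s t. 0 \<le> s \<Longrightarrow> s < t \<Longrightarrow>
        distributed M lborel (\<lambda>\<omega>. B \<omega> t - B \<omega> s) (normal_density 0 (sqrt (t - s)))"
    and ind: "\<And>ts. sorted_wrt (<) ts \<Longrightarrow> (\<forall>t\<in>set ts. 0 \<le> t) \<Longrightarrow>
        prob_space.indep_vars M (\<lambda>_. borel)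
          (\<lambda>i \<omega>. B \<omega> (ts ! Suc i) - B \<omega> (ts ! i)) {i. Suc i < length ts}"
    using BM unfolding brownian_motion_def by auto
  interpret prob_space M by (rule ps)
  define ts where "ts = tsl J"
  define I where "I = Ix J"
  define D where "D = (\<lambda>i \<omega>. B \<omega> (ts ! Suc i) - B \<omega> (ts ! i))"
  let ?P = "PiM I (\<lambda>_. borel :: real measure)"
  have tp: "sorted_wrt (<) ts" "\<forall>t\<in>set ts. 0 \<le> t" "J \<subseteq> set ts" "ts ! 0 = 0" "0 \<in> I"
    using tsl_props[OF J] by (auto simp: ts_def I_def)
  have I_eq: "I = {i. Suc i < length ts}" by (simp add: I_def Ix_def ts_def)
  have indep: "indep_vars (\<lambda>_. borel) D I"
    using ind[OF tp(1,2)] by (simp add: D_def I_eq)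
  have rv: "random_variable borel (D i)" for i
    unfolding D_def using meas by (intro borel_measurable_diff) auto
  have eqd: "distr M ?P (\<lambda>\<omega>. \<lambda>i\<in>I. D i \<omega>) = PiM I (\<lambda>i. distr M borel (D i))"
    using indep_vars_iff_distr_eq_PiM[where I=I and X=D and M'="\<lambda>_. borel"] tp(5) rv indep by auto
  have "PiM I (\<lambda>i. distr M borel (D i)) = fddm J"
    unfolding fddm_def I_def[symmetric] ts_def[symmetric]
  proof (rule PiM_cong[OF refl])
    fix i assume i: "i \<in> I"
    have lt: "ts ! i < ts ! Suc i" using tp(1) i by (auto simp: I_eq sorted_wrt_iff_nth_less)
    have nn: "0 \<le> ts ! i" using tp(2) i by (auto simp: I_eq)
    have "distributed M lborel (D i) (normal_density 0 (sqrt (ts ! Suc i - ts ! i)))"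
      using dist[OF nn lt] by (simp add: D_def)
    then have "distr M lborel (D i) = density lborel (\<lambda>y. ennreal (normal_density 0 (sqrt (ts ! Suc i - ts ! i)) y))"
      by (simp add: distributed_def)
    moreover have "distr M borel (D i) = distr M lborel (D i)"
      by (rule distr_cong) auto
    ultimately show "distr M borel (D i) = density lborel (\<lambda>y. ennreal (normal_density 0 (sqrt (ts ! Suc i - ts ! i)) y))"
      by simp
  qed
  note eqd = eqd[unfolded this]
  have tele: "B \<omega> (ts ! k) = x + (\<Sum>i<k. D i \<omega>)" if "\<omega> \<in> space M" "k < length ts" for \<omega> k
    using that(2)
  proof (induction k)
    case 0 then show ?case using tp(4) start[OF that(1)] by simp
  next
    case (Suc k) then show ?case by (simp add: D_def)
  qed
  have Phi: "(\<lambda>\<omega>. \<lambda>i\<in>I. D i \<omega>) \<in> measurable M ?P"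
    using rv by (intro measurable_restrict) auto
  have ev: "{\<omega>\<in>space M. \<forall>j\<in>J. B \<omega> j \<in> A j} = (\<lambda>\<omega>. \<lambda>i\<in>I. D i \<omega>) -` Sset x J A \<inter> space M"
  proof (intro set_eqI iffI)
    fix \<omega> assume "\<omega> \<in> {\<omega>\<in>space M. \<forall>j\<in>J. B \<omega> j \<in> A j}"
    then have w: "\<omega> \<in> space M" "\<forall>j\<in>J. B \<omega> j \<in> A j" by auto
    have "(\<lambda>i\<in>I. D i \<omega>) \<in> space ?P" by (simp add: space_PiM)
    moreover have "\<forall>j\<in>J. \<forall>k\<in>{..<length ts}. ts ! k = j \<longrightarrow> x + (\<Sum>i<k. (\<lambda>i\<in>I. D i \<omega>) i) \<in> A j"
    proof (intro ballI impI)
      fix j k assume jk: "j \<in> J" "k \<in> {..<length ts}" "ts ! k = j"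
      have "(\<Sum>i<k. (\<lambda>i\<in>I. D i \<omega>) i) = (\<Sum>i<k. D i \<omega>)"
        using jk(2) by (intro sum.cong) (auto simp: I_eq)
      then show "x + (\<Sum>i<k. (\<lambda>i\<in>I. D i \<omega>) i) \<in> A j"
        using tele[OF w(1), of k] jk w(2) by auto
    qed
    ultimately show "\<omega> \<in> (\<lambda>\<omega>. \<lambda>i\<in>I. D i \<omega>) -` Sset x J A \<inter> space M"
      using w(1) by (simp add: Sset_def I_def[symmetric] ts_def[symmetric])
  next
    fix \<omega> assume "\<omega> \<in> (\<lambda>\<omega>. \<lambda>i\<in>I. D i \<omega>) -` Sset x J A \<inter> space M"
    then have w: "\<omega> \<in> space M"
      and H: "\<forall>j\<in>J. \<forall>k\<in>{..<length ts}. ts ! k = j \<longrightarrow> x + (\<Sum>i<k. (\<lambda>i\<in>I. D i \<omega>) i) \<in> A j"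
      by (auto simp: Sset_def I_def[symmetric] ts_def[symmetric])
    have "B \<omega> j \<in> A j" if j: "j \<in> J" for j
    proof -
      obtain k where k: "k < length ts" "ts ! k = j"
        using tp(3) j in_set_conv_nth[of j ts] by blast
      have "(\<Sum>i<k. (\<lambda>i\<in>I. D i \<omega>) i) = (\<Sum>i<k. D i \<omega>)"
        using k(1) by (intro sum.cong) (auto simp: I_eq)
      moreover have "x + (\<Sum>i<k. (\<lambda>i\<in>I. D i \<omega>) i) \<in> A j"
        using H j k by blast
      ultimately show ?thesis using tele[OF w k(1)] k by simp
    qed
    then show "\<omega> \<in> {\<omega>\<in>space M. \<forall>j\<in>J. B \<omega> j \<in> A j}" using w by auto
  qed
  have "emeasure M {\<omega>\<in>space M. \<forall>j\<in>J. B \<omega> j \<in> A j} = emeasure (distr M ?P (\<lambda>\<omega>. \<lambda>i\<in>I. D i \<omega>)) (Sset x J A)"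
    unfolding ev using Sset_meas[OF A J(1), where x=x] Phi by (subst emeasure_distr) (auto simp: I_def)
  then show ?thesis using eqd by simp
qed



lemma pre_emb:
  assumes "J \<subseteq> Qp"
  shows "(\<lambda>\<omega>. \<lambda>q\<in>Qp. B \<omega> q) -` prod_emb Qp (\<lambda>_. borel) J (Pi\<^sub>E J A) \<inter> space N
        = {\<omega>\<in>space N. \<forall>j\<in>J. B \<omega> j \<in> A j}"
  using assms by (auto simp: prod_emb_def PiE_iff subset_eq)

lemma path_law_eq:
  assumes BM1: "brownian_motion M1 B1 x" and BM2: "brownian_motion M2 B2 x"
  shows "distr M1 (PiM Qp (\<lambda>_. borel)) (\<lambda>\<omega>. \<lambda>q\<in>Qp. B1 \<omega> q)
       = distr M2 (PiM Qp (\<lambda>_. borel)) (\<lambda>\<omega>. \<lambda>q\<in>Qp. B2 \<omega> q)"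
proof -
  let ?P = "PiM Qp (\<lambda>_. borel :: real measure)"
  have ps1: "prob_space M1" and m1: "\<And>t. (\<lambda>\<omega>. B1 \<omega> t) \<in> borel_measurable M1"
    using BM1 unfolding brownian_motion_def by auto
  have ps2: "prob_space M2" and m2: "\<And>t. (\<lambda>\<omega>. B2 \<omega> t) \<in> borel_measurable M2"
    using BM2 unfolding brownian_motion_def by auto
  have P1: "(\<lambda>\<omega>. \<lambda>q\<in>Qp. B1 \<omega> q) \<in> measurable M1 ?P" using m1 by (intro measurable_restrict) auto
  have P2: "(\<lambda>\<omega>. \<lambda>q\<in>Qp. B2 \<omega> q) \<in> measurable M2 ?P" using m2 by (intro measurable_restrict) auto
  show ?thesis
  proof (rule measure_eqI_PiM_infinite)
    show "sets (distr M1 ?P (\<lambda>\<omega>. \<lambda>q\<in>Qp. B1 \<omega> q)) = sets ?P" by simp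
    show "sets (distr M2 ?P (\<lambda>\<omega>. \<lambda>q\<in>Qp. B2 \<omega> q)) = sets ?P" by simp
    show "finite_measure (distr M1 ?P (\<lambda>\<omega>. \<lambda>q\<in>Qp. B1 \<omega> q))"
      using prob_space.prob_space_distr[OF ps1 P1] by (simp add: prob_space_def)
    fix A :: "real \<Rightarrow> real set" and J assume J: "finite J" "J \<subseteq> Qp" and A: "\<And>i. i \<in> J \<Longrightarrow> A i \<in> sets borel"
    have J0: "J \<subseteq> {0..}" using J by (auto simp: Qp_def)
    have pe: "prod_emb Qp (\<lambda>_. borel) J (Pi\<^sub>E J A) \<in> sets ?P"
      using J A by (intro sets_PiM_I) auto
    show "emeasure (distr M1 ?P (\<lambda>\<omega>. \<lambda>q\<in>Qp. B1 \<omega> q)) (prod_emb Qp (\<lambda>_. borel) J (Pi\<^sub>E J A)) =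
          emeasure (distr M2 ?P (\<lambda>\<omega>. \<lambda>q\<in>Qp. B2 \<omega> q)) (prod_emb Qp (\<lambda>_. borel) J (Pi\<^sub>E J A))"
    proof -
      have e1: "emeasure M1 {\<omega>\<in>space M1. \<forall>j\<in>J. B1 \<omega> j \<in> A j} = emeasure (fddm J) (Sset x J A)"
        by (rule fdd[OF BM1 J(1) J0]) (rule A)
      have e2: "emeasure M2 {\<omega>\<in>space M2. \<forall>j\<in>J. B2 \<omega> j \<in> A j} = emeasure (fddm J) (Sset x J A)"
        by (rule fdd[OF BM2 J(1) J0]) (rule A)
      show ?thesis
        unfolding emeasure_distr[OF P1 pe] emeasure_distr[OF P2 pe] pre_emb[OF J(2)] e1 e2 ..
    qed
  qed
qed

lemma evt_gen:
  assumes BM: "brownian_motion N B x"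
    and g1: "\<forall>a b. a \<le> b \<longrightarrow> b \<le> 0 \<longrightarrow> g b \<le> g a"
    and g2: "\<forall>a b. 0 \<le> a \<longrightarrow> a \<le> b \<longrightarrow> g a \<le> g b"
  shows "measure N {\<omega>\<in>space N. \<forall>t\<ge>0. g (B \<omega> t) \<le> c + t}
      = measure (distr N (PiM Qp (\<lambda>_. borel)) (\<lambda>\<omega>. \<lambda>q\<in>Qp. B \<omega> q)) {z \<in> space (PiM Qp (\<lambda>_. borel)). goodpath g c z}"
proof -
  let ?P = "PiM Qp (\<lambda>_. borel :: real measure)"
  let ?S = "{z \<in> space ?P. goodpath g c z}"
  have S: "?S \<in> sets ?P" by (rule goodpath_meas[OF g1 g2])
    have m: "\<And>t. (\<lambda>\<omega>. B \<omega> t) \<in> borel_measurable N"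
      and cont: "\<And>\<omega>. \<omega> \<in> space N \<Longrightarrow> continuous_on {0..} (B \<omega>)"
      using BM unfolding brownian_motion_def by auto
    have Phi: "(\<lambda>\<omega>. \<lambda>q\<in>Qp. B \<omega> q) \<in> measurable N ?P" using m by (intro measurable_restrict) auto
    have gp: "goodpath g c (\<lambda>q\<in>Qp. B \<omega> q) = goodpath g c (B \<omega>)" for \<omega>
    proof -
      have "(SUP s\<in>Qp\<inter>{..q}. ereal ((\<lambda>q\<in>Qp. B \<omega> q) s)) = (SUP s\<in>Qp\<inter>{..q}. ereal (B \<omega> s))" for q
        by (rule SUP_cong) auto
      moreover have "(INF s\<in>Qp\<inter>{..q}. ereal ((\<lambda>q\<in>Qp. B \<omega> q) s)) = (INF s\<in>Qp\<inter>{..q}. ereal (B \<omega> s))" for q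
        by (rule INF_cong) auto
      ultimately show ?thesis by (simp add: goodpath_def)
    qed
    have "{\<omega>\<in>space N. \<forall>t\<ge>0. g (B \<omega> t) \<le> c + t} = (\<lambda>\<omega>. \<lambda>q\<in>Qp. B \<omega> q) -` ?S \<inter> space N"
      using path_char[OF cont g1 g2] gp by (auto simp: space_PiM)
    then show ?thesis using measure_distr[OF Phi S] by simp
qed

lemma evt_eq:
  assumes BM1: "brownian_motion M1 B1 x" and BM2: "brownian_motion M2 B2 x"
    and g1: "\<forall>a b. a \<le> b \<longrightarrow> b \<le> 0 \<longrightarrow> g b \<le> g a"
    and g2: "\<forall>a b. 0 \<le> a \<longrightarrow> a \<le> b \<longrightarrow> g a \<le> g b"
  shows "measure M1 {\<omega>\<in>space M1. \<forall>t\<ge>0. g (B1 \<omega> t) \<le> c + t}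
       = measure M2 {\<omega>\<in>space M2. \<forall>t\<ge>0. g (B2 \<omega> t) \<le> c + t}"
  using evt_gen[OF BM1 g1 g2, of c] evt_gen[OF BM2 g1 g2, of c] path_law_eq[OF BM1 BM2] by simp



lemma (in prob_space) indep_vars_cong_local:
  assumes "indep_vars M' X I" "\<And>i. i \<in> I \<Longrightarrow> X i = Y i"
  shows "indep_vars M' Y I"
  using assms unfolding indep_vars_def2
  by (auto cong: indep_sets_cong)

lemma hitting_char:
  "(\<forall>y. ereal (g y - c) \<le> hitting_time w y) \<longleftrightarrow> (\<forall>t\<ge>0. g (w t) \<le> c + t)"
proof
  assume H: "\<forall>y. ereal (g y - c) \<le> hitting_time w y"
  show "\<forall>t\<ge>0. g (w t) \<le> c + t"
  proof (intro allI impI)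
    fix t :: real assume t: "0 \<le> t"
    have "hitting_time w (w t) \<le> ereal t"
      unfolding hitting_time_def using t by (intro Inf_lower) auto
    then have "ereal (g (w t) - c) \<le> ereal t" using H order.trans by blast
    then show "g (w t) \<le> c + t" by simp
  qed
next
  assume H: "\<forall>t\<ge>0. g (w t) \<le> c + t"
  show "\<forall>y. ereal (g y - c) \<le> hitting_time w y"
    unfolding hitting_time_def
  proof (intro allI Inf_greatest)
    fix y z assume "z \<in> {ereal t |t. 0 \<le> t \<and> w t = y}"
    then obtain t where "z = ereal t" "0 \<le> t" "w t = y" by auto
    then show "ereal (g y - c) \<le> z" using H by auto
  qed
qed

lemma bm_scale:
  assumes BM: "brownian_motion M B x" and xi: "\<xi> > 0"
  shows "brownian_motion M (\<lambda>\<omega> t. B \<omega> (\<xi> * t) / sqrt \<xi>) (x / sqrt \<xi>)"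
proof -
  have ps: "prob_space M" and meas: "\<And>t. (\<lambda>\<omega>. B \<omega> t) \<in> borel_measurable M"
    and start: "\<And>\<omega>. \<omega> \<in> space M \<Longrightarrow> B \<omega> 0 = x \<and> continuous_on {0..} (B \<omega>)"
    and dist: "\<And>s t. 0 \<le> s \<Longrightarrow> s < t \<Longrightarrow>
        distributed M lborel (\<lambda>\<omega>. B \<omega> t - B \<omega> s) (normal_density 0 (sqrt (t - s)))"
    and ind: "\<And>ts. sorted_wrt (<) ts \<Longrightarrow> (\<forall>t\<in>set ts. 0 \<le> t) \<Longrightarrow>
        prob_space.indep_vars M (\<lambda>_. borel)
          (\<lambda>i \<omega>. B \<omega> (ts ! Suc i) - B \<omega> (ts ! i)) {i. Suc i < length ts}"
    using BM unfolding brownian_motion_def by auto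
  interpret prob_space M by (rule ps)
  have sq: "sqrt \<xi> > 0" using xi by simp
  show ?thesis unfolding brownian_motion_def
  proof (intro conjI allI impI ballI)
    show "prob_space M" by (rule ps)
    show "(\<lambda>\<omega>. B \<omega> (\<xi> * t) / sqrt \<xi>) \<in> borel_measurable M" for t
      using meas by (intro borel_measurable_divide) auto
    fix \<omega> assume w: "\<omega> \<in> space M"
    show "B \<omega> (\<xi> * 0) / sqrt \<xi> = x / sqrt \<xi>" using start[OF w] by simp
    have "continuous_on {0..} (\<lambda>t. B \<omega> (\<xi> * t))"
      using start[OF w] xi
      by (intro continuous_on_compose2[of "{0..}" "B \<omega>" "{0..}" "\<lambda>t. \<xi> * t"] continuous_intros) auto
    then show "continuous_on {0..} (\<lambda>t. B \<omega> (\<xi> * t) / sqrt \<xi>)"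
      using xi by (intro continuous_intros) auto
  next
    fix s t :: real assume st: "0 \<le> s" "s < t"
    have d: "distributed M lborel (\<lambda>\<omega>. B \<omega> (\<xi> * t) - B \<omega> (\<xi> * s)) (normal_density 0 (sqrt (\<xi> * t - \<xi> * s)))"
      using dist[of "\<xi> * s" "\<xi> * t"] st xi by auto
    have pos: "0 < sqrt (\<xi> * t - \<xi> * s)" using st xi by simp
    have "distributed M lborel (\<lambda>\<omega>. 0 + (1 / sqrt \<xi>) * (B \<omega> (\<xi> * t) - B \<omega> (\<xi> * s)))
        (normal_density (0 + (1 / sqrt \<xi>) * 0) (\<bar>1 / sqrt \<xi>\<bar> * sqrt (\<xi> * t - \<xi> * s)))"
      by (rule normal_density_affine[OF d pos]) (use sq in simp)
    moreover have "\<bar>1 / sqrt \<xi>\<bar> * sqrt (\<xi> * t - \<xi> * s) = sqrt (t - s)"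
      using xi st by (simp add: right_diff_distrib[symmetric] real_sqrt_mult)
    moreover have "(\<lambda>\<omega>. 0 + (1 / sqrt \<xi>) * (B \<omega> (\<xi> * t) - B \<omega> (\<xi> * s))) =
        (\<lambda>\<omega>. B \<omega> (\<xi> * t) / sqrt \<xi> - B \<omega> (\<xi> * s) / sqrt \<xi>)"
      by (auto simp: diff_divide_distrib)
    ultimately show "distributed M lborel (\<lambda>\<omega>. B \<omega> (\<xi> * t) / sqrt \<xi> - B \<omega> (\<xi> * s) / sqrt \<xi>)
        (normal_density 0 (sqrt (t - s)))" by simp
  next
    fix ts :: "real list" assume ts: "sorted_wrt (<) ts" "\<forall>t\<in>set ts. 0 \<le> t"
    let ?ts = "map (\<lambda>t. \<xi> * t) ts"
    have ts': "sorted_wrt (<) ?ts" "\<forall>t\<in>set ?ts. 0 \<le> t"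
      using ts xi by (auto simp: sorted_wrt_map elim!: sorted_wrt_mono_rel[rotated])
    have "indep_vars (\<lambda>_. borel) (\<lambda>i \<omega>. B \<omega> (?ts ! Suc i) - B \<omega> (?ts ! i)) {i. Suc i < length ?ts}"
      using ind[OF ts'] by simp
    then have "indep_vars (\<lambda>_. borel) (\<lambda>i \<omega>. (\<lambda>y. y / sqrt \<xi>) (B \<omega> (?ts ! Suc i) - B \<omega> (?ts ! i))) {i. Suc i < length ?ts}"
      by (rule indep_vars_compose2) auto
    then have "indep_vars (\<lambda>_. borel) (\<lambda>i \<omega>. (B \<omega> (?ts ! Suc i) - B \<omega> (?ts ! i)) / sqrt \<xi>) {i. Suc i < length ts}"
      by simp
    then show "indep_vars (\<lambda>_. borel)
        (\<lambda>i \<omega>. B \<omega> (\<xi> * ts ! Suc i) / sqrt \<xi> - B \<omega> (\<xi> * ts ! i) / sqrt \<xi>) {i. Suc i < length ts}"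
      by (rule indep_vars_cong_local) (auto simp: diff_divide_distrib)
  qed
qed



lemma ennreal_mult_INF_pos:
  fixes h :: "'b \<Rightarrow> ennreal"
  assumes c: "c > 0"
  shows "ennreal c * (INF g\<in>S. h g) = (INF g\<in>S. ennreal c * h g)"
proof (rule antisym)
  show "ennreal c * (INF g\<in>S. h g) \<le> (INF g\<in>S. ennreal c * h g)"
    by (intro INF_greatest mult_left_mono INF_lower) auto
  have inv: "ennreal (1/c) * ennreal c = 1" using c by (simp add: ennreal_mult[symmetric])
  have "ennreal (1/c) * (INF g\<in>S. ennreal c * h g) \<le> (INF g\<in>S. h g)"
  proof (rule INF_greatest)
    fix g assume "g \<in> S"
    then have "ennreal (1/c) * (INF g\<in>S. ennreal c * h g) \<le> ennreal (1/c) * (ennreal c * h g)"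
      by (intro mult_left_mono INF_lower) auto
    also have "\<dots> = h g" using inv by (simp add: mult.assoc[symmetric])
    finally show "ennreal (1/c) * (INF g\<in>S. ennreal c * h g) \<le> h g" .
  qed
  then have "ennreal c * (ennreal (1/c) * (INF g\<in>S. ennreal c * h g)) \<le> ennreal c * (INF g\<in>S. h g)"
    by (rule mult_left_mono) simp
  moreover have "ennreal c * (ennreal (1/c) * (INF g\<in>S. ennreal c * h g)) = (INF g\<in>S. ennreal c * h g)"
    using inv by (simp add: mult.assoc[symmetric] mult.commute[of "ennreal c"])
  ultimately show "(INF g\<in>S. ennreal c * h g) \<le> ennreal c * (INF g\<in>S. h g)" by simp
qed

lemma prob_scale:
  assumes BM: "\<And>x. brownian_motion (M x) (B x) x" and xi: "\<xi> > 0" and f: "f \<in> admissible \<xi>"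
    and fx: "fx = (\<lambda>x. f (sqrt \<xi> * x) / \<xi>)" and fxa: "fx \<in> admissible 1"
  shows "measure (M (sqrt \<xi> * x')) {\<omega> \<in> space (M (sqrt \<xi> * x')).
            \<forall>y. ereal (f y - f (sqrt \<xi> * x')) \<le> hitting_time (B (sqrt \<xi> * x') \<omega>) y}
       = measure (M x') {\<omega> \<in> space (M x'). \<forall>y. ereal (fx y - fx x') \<le> hitting_time (B x' \<omega>) y}"
proof -
  define x where "x = sqrt \<xi> * x'"
  define W where "W = (\<lambda>\<omega> t. B x \<omega> (\<xi> * t) / sqrt \<xi>)"
  have sq: "sqrt \<xi> > 0" using xi by simp
  have BMW: "brownian_motion (M x) W x'"
    using bm_scale[OF BM[of x] xi] sq by (simp add: W_def x_def)
  have g1: "\<forall>a b. a \<le> b \<longrightarrow> b \<le> 0 \<longrightarrow> fx b \<le> fx a"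
    and g2: "\<forall>a b. 0 \<le> a \<longrightarrow> a \<le> b \<longrightarrow> fx a \<le> fx b"
    using fxa by (auto simp: admissible_def)
  have "{\<omega> \<in> space (M x). \<forall>y. ereal (f y - f x) \<le> hitting_time (B x \<omega>) y}
      = {\<omega> \<in> space (M x). \<forall>t\<ge>0. f (B x \<omega> t) \<le> f x + t}"
    using hitting_char[of f "f x"] by simp
  also have "\<dots> = {\<omega> \<in> space (M x). \<forall>t\<ge>0. fx (W \<omega> t) \<le> fx x' + t}"
  proof -
    have "(\<forall>t\<ge>0. f (B x \<omega> t) \<le> f x + t) \<longleftrightarrow> (\<forall>t\<ge>0. fx (W \<omega> t) \<le> fx x' + t)" for \<omega>
    proof
      assume H: "\<forall>t\<ge>0. f (B x \<omega> t) \<le> f x + t"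
      show "\<forall>t\<ge>0. fx (W \<omega> t) \<le> fx x' + t"
      proof (intro allI impI)
        fix t :: real assume t: "0 \<le> t"
        have "f (B x \<omega> (\<xi> * t)) \<le> f x + \<xi> * t" using H t xi by simp
        then have "f (B x \<omega> (\<xi> * t)) / \<xi> \<le> f x / \<xi> + t" using xi by (simp add: field_simps)
        then show "fx (W \<omega> t) \<le> fx x' + t" using sq by (simp add: fx W_def x_def)
      qed
    next
      assume H: "\<forall>t\<ge>0. fx (W \<omega> t) \<le> fx x' + t"
      show "\<forall>t\<ge>0. f (B x \<omega> t) \<le> f x + t"
      proof (intro allI impI)
        fix t :: real assume t: "0 \<le> t"
        have "fx (W \<omega> (t / \<xi>)) \<le> fx x' + t / \<xi>" using H t xi by simp
        then have "f (B x \<omega> t) / \<xi> \<le> f x / \<xi> + t / \<xi>" using sq xi by (simp add: fx W_def x_def)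
        then show "f (B x \<omega> t) \<le> f x + t" using xi by (simp add: field_simps)
      qed
    qed
    then show ?thesis by auto
  qed
  finally have e1: "{\<omega> \<in> space (M x). \<forall>y. ereal (f y - f x) \<le> hitting_time (B x \<omega>) y}
      = {\<omega> \<in> space (M x). \<forall>t\<ge>0. fx (W \<omega> t) \<le> fx x' + t}" .
  have e2: "{\<omega> \<in> space (M x'). \<forall>y. ereal (fx y - fx x') \<le> hitting_time (B x' \<omega>) y}
      = {\<omega> \<in> space (M x'). \<forall>t\<ge>0. fx (B x' \<omega> t) \<le> fx x' + t}"
    using hitting_char[of fx "fx x'"] by simp
  show ?thesis
    unfolding x_def[symmetric] e1 e2 by (rule evt_eq[OF BMW BM g1 g2])
qed

theorem lemma2p2:
  fixes M :: "real \<Rightarrow> 'a measure" and B :: "real \<Rightarrow> 'a \<Rightarrow> real \<Rightarrow> real"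
  assumes BM: "\<And>x. brownian_motion (M x) (B x) x"
  shows "(\<forall>\<xi> f. \<xi> > 0 \<longrightarrow> f \<in> admissible \<xi> \<longrightarrow>
            (let f\<xi> = (\<lambda>x. f (sqrt \<xi> * x) / \<xi>) in
               f\<xi> \<in> admissible 1 \<and> energy M B f = ennreal (sqrt \<xi>) * energy M B f\<xi>))
         \<and> (\<forall>\<xi>>0. rate M B \<xi> = ennreal (sqrt \<xi>) * rate M B 1)"
proof -
  have adm: "(\<lambda>x. f (sqrt \<xi> * x) / \<xi>) \<in> admissible 1" if xi: "\<xi> > 0" and f: "f \<in> admissible \<xi>" for \<xi> f
    using adm_scale[OF f, of "sqrt \<xi>" "1/\<xi>"] xi by simp
  have en: "energy M B f = ennreal (sqrt \<xi>) * energy M B (\<lambda>x. f (sqrt \<xi> * x) / \<xi>)"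
    if xi: "\<xi> > 0" and f: "f \<in> admissible \<xi>" for \<xi> f
  proof -
    have sq: "sqrt \<xi> > 0" using xi by simp
    show ?thesis
      unfolding energy_def
      by (subst nn_integral_scale_any[OF sq])
         (simp add: prob_scale[OF BM xi f refl adm[OF xi f]])
  qed
  have part1: "\<forall>\<xi> f. \<xi> > 0 \<longrightarrow> f \<in> admissible \<xi> \<longrightarrow>
            (let f\<xi> = (\<lambda>x. f (sqrt \<xi> * x) / \<xi>) in
               f\<xi> \<in> admissible 1 \<and> energy M B f = ennreal (sqrt \<xi>) * energy M B f\<xi>)"
    using adm en by (simp add: Let_def)
  have part2: "rate M B \<xi> = ennreal (sqrt \<xi>) * rate M B 1" if xi: "\<xi> > 0" for \<xi>
  proof -
    define sc where "sc = (\<lambda>f x. f (sqrt \<xi> * x) / \<xi>)"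
    have sq: "sqrt \<xi> > 0" using xi by simp
    have img: "sc ` admissible \<xi> = admissible 1"
    proof
      show "sc ` admissible \<xi> \<subseteq> admissible 1" using adm[OF xi] by (auto simp: sc_def)
      show "admissible 1 \<subseteq> sc ` admissible \<xi>"
      proof
        fix g assume g: "g \<in> admissible 1"
        have h: "(\<lambda>x. g ((1 / sqrt \<xi>) * x) * \<xi>) \<in> admissible (1 * \<xi>)"
          by (rule adm_scale[OF g]) (use xi in auto)
        have "sc (\<lambda>x. g ((1 / sqrt \<xi>) * x) * \<xi>) = g"
          using sq xi by (auto simp: sc_def)
        then show "g \<in> sc ` admissible \<xi>" using h by (metis image_eqI mult_1)
      qed
    qed
    have "rate M B \<xi> = (INF f\<in>admissible \<xi>. ennreal (sqrt \<xi>) * energy M B (sc f))"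
      unfolding rate_def sc_def using en[OF xi] by (intro INF_cong) auto
    also have "\<dots> = (INF g\<in>sc ` admissible \<xi>. ennreal (sqrt \<xi>) * energy M B g)"
      by (simp add: image_comp)
    also have "\<dots> = ennreal (sqrt \<xi>) * rate M B 1"
      unfolding img rate_def by (rule ennreal_mult_INF_pos[symmetric, OF sq])
    finally show ?thesis .
  qed
  show ?thesis using part1 part2 by blast
qed

end
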